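(* Let $a_1,a_2,a_3,\dots$ be nonnegative real numbers with $\sum_{j\ge1}a_j=1$, and let $a=\sup\{a_1,a_2,\dots\}$. Then for every $k\ge2$ and $2\le i\le k$, $$\sum_{j_1+\dots+j_i=k}a_{j_1}a_{j_2}\cdots a_{j_i}\le(1-a_k)a,$$ where the sum runs over all $(j_1,\dots,j_i)$ of positive integers with $j_1+\dots+j_i=k$. In particular $\sum_{j_1+\dots+j_i=k}a_{j_1}\cdots a_{j_i}\le a$ for all $k\ge1$ and $1\le i\le k$. *)

theory Defs
  imports Complex_Main
begin

definition compositions :: "nat \<Rightarrow> nat \<Rightarrow> nat list set" where
  "compositions k i = {js. length js = i \<and> (\<forall>j\<in>set js. 1 \<le> j) \<and> sum_list js = k}"

definition comp_sum :: "(nat \<Rightarrow> real) \<Rightarrow> nat \<Rightarrow> nat \<Rightarrow> real" where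
  "comp_sum a k i = (\<Sum>js\<in>compositions k i. prod_list (map a js))"

end

theory Submission
  imports Defs
begin

lemma comp_fin: "finite (compositions m i)"
proof -
  have "compositions m i \<subseteq> {xs. set xs \<subseteq> {0..m} \<and> length xs = i}"
    unfolding compositions_def using member_le_sum_list by fastforce
  moreover have "finite {xs. set xs \<subseteq> {0..m} \<and> length xs = i}"
    using finite_lists_length_eq[of "{0..m}" i] by simp
  ultimately show ?thesis by (rule finite_subset)
qed

lemma comp_bij: "bij_betw (\<lambda>(n,js). Suc n # js) (SIGMA n:{..<m}. compositions (m - Suc n) i)
   (compositions m (Suc i))"
proof (rule bij_betw_imageI)
  show "inj_on (\<lambda>(n,js). Suc n # js) (SIGMA n:{..<m}. compositions (m - Suc n) i)"
    by (auto simp: inj_on_def)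
  show "(\<lambda>(n,js). Suc n # js) ` (SIGMA n:{..<m}. compositions (m - Suc n) i) = compositions m (Suc i)"
  proof
    show "(\<lambda>(n,js). Suc n # js) ` (SIGMA n:{..<m}. compositions (m - Suc n) i) \<subseteq> compositions m (Suc i)"
      by (auto simp: compositions_def)
  next
    show "compositions m (Suc i) \<subseteq> (\<lambda>(n,js). Suc n # js) ` (SIGMA n:{..<m}. compositions (m - Suc n) i)"
    proof
      fix xs assume "xs \<in> compositions m (Suc i)"
      then obtain j js where xs: "xs = j # js" and j: "1 \<le> j" and l: "length js = i"
        and p: "\<forall>x\<in>set js. 1 \<le> x" and s: "j + sum_list js = m"
        unfolding compositions_def by (cases xs) auto
      have "(j - 1, js) \<in> (SIGMA n:{..<m}. compositions (m - Suc n) i)"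
        using j l p s by (auto simp: compositions_def)
      moreover have "xs = (\<lambda>(n,js). Suc n # js) (j - 1, js)" using xs j by simp
      ultimately show "xs \<in> (\<lambda>(n,js). Suc n # js) ` (SIGMA n:{..<m}. compositions (m - Suc n) i)"
        by blast
    qed
  qed
qed

lemma comp_rec: "comp_sum a m (Suc i) = (\<Sum>n<m. a (Suc n) * comp_sum a (m - Suc n) i)"
proof -
  have "comp_sum a m (Suc i) = (\<Sum>p\<in>(SIGMA n:{..<m}. compositions (m - Suc n) i).
           prod_list (map a ((\<lambda>(n,js). Suc n # js) p)))"
    unfolding comp_sum_def using sum.reindex_bij_betw[OF comp_bij, symmetric] by blast
  also have "\<dots> = (\<Sum>n<m. \<Sum>js\<in>compositions (m - Suc n) i. a (Suc n) * prod_list (map a js))"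
    by (subst sum.Sigma) (auto simp: comp_fin split_def)
  also have "\<dots> = (\<Sum>n<m. a (Suc n) * comp_sum a (m - Suc n) i)"
    by (simp add: comp_sum_def sum_distrib_left)
  finally show ?thesis .
qed

lemma comp_one: "comp_sum a m 1 = (if m = 0 then 0 else a m)"
proof -
  have "compositions m 1 = (if m = 0 then {} else {[m]})"
    unfolding compositions_def by (auto simp: length_Suc_conv)
  then show ?thesis by (simp add: comp_sum_def)
qed

theorem lemma4:
  fixes a :: "nat \<Rightarrow> real"
  assumes nonneg: "\<And>j. 1 \<le> j \<Longrightarrow> 0 \<le> a j"
    and sum1: "(\<lambda>n. a (Suc n)) sums 1"
  shows "(\<forall>k i. 2 \<le> k \<longrightarrow> 2 \<le> i \<longrightarrow> i \<le> k \<longrightarrow>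
            comp_sum a k i \<le> (1 - a k) * Sup (a ` {1..}))
       \<and> (\<forall>k i. 1 \<le> k \<longrightarrow> 1 \<le> i \<longrightarrow> i \<le> k \<longrightarrow>
            comp_sum a k i \<le> Sup (a ` {1..}))"
proof -
  define A where "A = Sup (a ` {1..})"
  have summ: "summable (\<lambda>n. a (Suc n))" and suminf: "(\<Sum>n. a (Suc n)) = 1"
    using sum1 by (rule sums_summable, metis sums_unique)
  have ps: "(\<Sum>n<m. a (Suc n)) \<le> 1" for m
    using sum_le_suminf[OF summ, of "{..<m}"] nonneg suminf by simp
  have le1: "a j \<le> 1" if j1: "1 \<le> j" for j
  proof -
    obtain j' where j': "j = Suc j'" using j1 by (cases j) auto
    have "(\<Sum>n<j. a (Suc n)) = (\<Sum>n<j - 1. a (Suc n)) + a j"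
      using j' by simp
    moreover have "(\<Sum>n<j - 1. a (Suc n)) \<ge> 0" by (intro sum_nonneg) (simp add: nonneg)
    ultimately show ?thesis using ps[of j] by linarith
  qed
  have bdd: "bdd_above (a ` {1..})" by (rule bdd_aboveI[of _ 1]) (auto simp: le1)
  have aA: "a j \<le> A" if "1 \<le> j" for j
    unfolding A_def by (rule cSup_upper) (use that bdd in auto)
  have A0: "0 \<le> A" using aA[of 1] nonneg[of 1] by simp
  have B: "comp_sum a m i \<le> A" if "1 \<le> i" for m i
    using that
  proof (induction i arbitrary: m rule: nat_induct_at_least)
    case base
    then show ?case using aA[of m] A0 comp_one[of a m] by simp
  next
    case (Suc i)
    have "comp_sum a m (Suc i) = (\<Sum>n<m. a (Suc n) * comp_sum a (m - Suc n) i)"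
      by (rule comp_rec)
    also have "\<dots> \<le> (\<Sum>n<m. a (Suc n) * A)"
      by (intro sum_mono mult_left_mono Suc.IH) (auto simp: nonneg)
    also have "\<dots> = (\<Sum>n<m. a (Suc n)) * A" by (simp add: sum_distrib_right)
    also have "\<dots> \<le> 1 * A" by (intro mult_right_mono ps A0)
    finally show ?case by simp
  qed
  have C: "comp_sum a k i \<le> (1 - a k) * A" if k2: "2 \<le> k" and i2: "2 \<le> i" for k i
  proof -
    obtain i' where i': "i = Suc i'" "1 \<le> i'" using i2 by (cases i) auto
    obtain k' where k': "k = Suc k'" using k2 by (cases k) auto
    have "comp_sum a k i = (\<Sum>n<k. a (Suc n) * comp_sum a (k - Suc n) i')"
      using i' by (simp add: comp_rec)
    also have "\<dots> = (\<Sum>n<k'. a (Suc n) * comp_sum a (k - Suc n) i')"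
    proof -
      have "compositions 0 i' = {}" using i'
        by (auto simp: compositions_def length_Suc_conv Suc_le_length_iff)
      then have "comp_sum a 0 i' = 0" by (simp add: comp_sum_def)
      then show ?thesis using k' by simp
    qed
    also have "\<dots> \<le> (\<Sum>n<k'. a (Suc n) * A)"
      by (intro sum_mono mult_left_mono B) (use i'(2) in \<open>auto simp: nonneg\<close>)
    also have "\<dots> = (\<Sum>n<k'. a (Suc n)) * A" by (simp add: sum_distrib_right)
    also have "\<dots> \<le> (1 - a k) * A"
    proof (intro mult_right_mono A0)
      show "(\<Sum>n<k'. a (Suc n)) \<le> 1 - a k" using ps[of k] k' by simp
    qed
    finally show ?thesis .
  qed
  show ?thesis unfolding A_def[symmetric]
  proof (intro conjI allI impI)
    fix k i :: nat assume "2 \<le> k" "2 \<le> i" "i \<le> k"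
    then show "comp_sum a k i \<le> (1 - a k) * A" using C by blast
  next
    fix k i :: nat assume "1 \<le> k" "1 \<le> i" "i \<le> k"
    then show "comp_sum a k i \<le> A" using B by blast
  qed
qed

end
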